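(* Fix integers $k\ge 1$ and $\beta_0\in\mathbb{R}$. Let $R_0$ be a random $k\times 2$ matrix with $vec(R_0)\sim N\big(vec(\mu a_\Delta'),\ \Omega_0\otimes\Phi\big)$, where $a_\Delta=(\Delta,1)'$, $\Delta\in\mathbb{R}$, $\mu\in\mathbb{R}^k$, $\Omega_0$ is a $2\times 2$ positive definite matrix and $\Phi$ is a $k\times k$ positive definite matrix. The matrices $\Omega_0,\Phi$ are known but not fixed: the data are $(R_0,\Omega_0,\Phi)$ and the parameters are $(\Delta,\mu,\Omega_0,\Phi)$. Let the group $\mathcal{G}_L(k)$ of invertible $k\times k$ matrices act on the sample space by $g_1\circ(R_0,\Omega_0,\Phi)=(g_1R_0,\ \Omega_0,\ g_1\Phi g_1')$ and on the parameter space by $g_1\circ(\Delta,\mu,\Omega_0,\Phi)=(\Delta,\ g_1\mu,\ \Omega_0,\ g_1\Phi g_1')$. Define $$S=\Phi^{-1/2}R_0e_1\,(e_1'\Omega_0e_1)^{-1/2},\qquad T=\Phi^{-1/2}R_0\Omega_0^{-1}e_2\,(e_2'\Omega_0^{-1}e_2)^{-1/2},$$ where $e_1=(1,0)'$, $e_2=(0,1)'$, and $Q=[S:T]'[S:T]$. Define also $\lambda=\mu'\Phi^{-1}\mu$, $c=\Delta\,(e_1'\Omega_0e_1)^{-1/2}$ and $d=a_\Delta'\Omega_0^{-1}e_2\,(e_2'\Omega_0^{-1}e_2)^{-1/2}$. Then: (i) a maximal invariant in the sample space under this group action is $(Q,\Omega_0)$; and (ii) a maximal invariant in the parameter space is $(c^2\lambda,\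 cd\lambda,\ d^2\lambda,\ \Omega_0)$.
   Context: Origin of the setting: in the IV model with reduced form $R=\mu a'+\widetilde V$, $a=(\beta,1)'$, $vec(\widetilde V)\sim N(0,\Omega\otimes\Phi)$, one sets $B_0=\begin{pmatrix}1&0\\-\beta_0&1\end{pmatrix}$, $R_0=RB_0$, $\Omega_0=B_0'\Omega B_0$, $\Delta=\beta-\beta_0$; then $S$ and $T$ above coincide with $\Phi^{-1/2}Rb_0(b_0'\Omega b_0)^{-1/2}$ and $\Phi^{-1/2}R\Omega^{-1}a_0(a_0'\Omega^{-1}a_0)^{-1/2}$ with $b_0=(1,-\beta_0)'$, $a_0=(\beta_0,1)'$, and $c,d$ are the constants with $E[S]=c\,\Phi^{-1/2}\mu$, $E[T]=d\,\Phi^{-1/2}\mu$. $\Phi^{-1/2}$ denotes the symmetric positive definite inverse square root. A maximal invariant is an invariant function such that equal values imply the arguments lie in the same group orbit. *)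

theory Defs
  imports "HOL-Analysis.Analysis"
begin

definition pos_def_mat :: "real^'n^'n \<Rightarrow> bool" where
  "pos_def_mat A \<longleftrightarrow> transpose A = A \<and> (\<forall>x. x \<noteq> 0 \<longrightarrow> x \<bullet> (A *v x) > 0)"

definition inv_sqrt_mat :: "real^'n^'n \<Rightarrow> real^'n^'n" where
  "inv_sqrt_mat A = (THE M. pos_def_mat M \<and> M ** M = matrix_inv A)"

definition maximal_invariant ::
  "'g set \<Rightarrow> ('g \<Rightarrow> 'x \<Rightarrow> 'x) \<Rightarrow> 'x set \<Rightarrow> ('x \<Rightarrow> 'y) \<Rightarrow> bool" where
  "maximal_invariant G act X f \<longleftrightarrow>
     (\<forall>g\<in>G. \<forall>x\<in>X. f (act g x) = f x) \<and>
     (\<forall>x\<in>X. \<forall>y\<in>X. f x = f y \<longrightarrow> (\<exists>g\<in>G. y = act g x))"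

definition e1 :: "real^2" where "e1 = vector [1, 0]"
definition e2 :: "real^2" where "e2 = vector [0, 1]"

definition sample_space :: "((real^2^'k) \<times> (real^2^2) \<times> (real^'k^'k)) set" where
  "sample_space = {(R0, \<Omega>0, \<Phi>). pos_def_mat \<Omega>0 \<and> pos_def_mat \<Phi>}"

definition sample_act :: "real^'k^'k \<Rightarrow> (real^2^'k) \<times> (real^2^2) \<times> (real^'k^'k)
    \<Rightarrow> (real^2^'k) \<times> (real^2^2) \<times> (real^'k^'k)" where
  "sample_act g1 x = (case x of (R0, \<Omega>0, \<Phi>) \<Rightarrow> (g1 ** R0, \<Omega>0, g1 ** \<Phi> ** transpose g1))"

definition S_stat :: "real^2^'k \<Rightarrow> real^2^2 \<Rightarrow> real^'k^'k \<Rightarrow> real^'k" where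
  "S_stat R0 \<Omega>0 \<Phi> = (1 / sqrt (e1 \<bullet> (\<Omega>0 *v e1))) *\<^sub>R (inv_sqrt_mat \<Phi> *v (R0 *v e1))"

definition T_stat :: "real^2^'k \<Rightarrow> real^2^2 \<Rightarrow> real^'k^'k \<Rightarrow> real^'k" where
  "T_stat R0 \<Omega>0 \<Phi> = (1 / sqrt (e2 \<bullet> (matrix_inv \<Omega>0 *v e2))) *\<^sub>R
      (inv_sqrt_mat \<Phi> *v (R0 *v (matrix_inv \<Omega>0 *v e2)))"

definition Q_stat :: "real^2^'k \<Rightarrow> real^2^2 \<Rightarrow> real^'k^'k \<Rightarrow> real^2^2" where
  "Q_stat R0 \<Omega>0 \<Phi> =
     (let ST = (\<chi> i. vector [S_stat R0 \<Omega>0 \<Phi> $ i, T_stat R0 \<Omega>0 \<Phi> $ i]) :: real^2^'k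
      in transpose ST ** ST)"

definition param_act :: "real^'k^'k \<Rightarrow> real \<times> (real^'k) \<times> (real^2^2) \<times> (real^'k^'k)
    \<Rightarrow> real \<times> (real^'k) \<times> (real^2^2) \<times> (real^'k^'k)" where
  "param_act g1 p = (case p of (\<Delta>, \<mu>, \<Omega>0, \<Phi>) \<Rightarrow>
      (\<Delta>, g1 *v \<mu>, \<Omega>0, g1 ** \<Phi> ** transpose g1))"

definition lambda_par :: "real^'k \<Rightarrow> real^'k^'k \<Rightarrow> real" where
  "lambda_par \<mu> \<Phi> = \<mu> \<bullet> (matrix_inv \<Phi> *v \<mu>)"

definition c_par :: "real \<Rightarrow> real^2^2 \<Rightarrow> real" where
  "c_par \<Delta> \<Omega>0 = \<Delta> / sqrt (e1 \<bullet> (\<Omega>0 *v e1))"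

definition d_par :: "real \<Rightarrow> real^2^2 \<Rightarrow> real" where
  "d_par \<Delta> \<Omega>0 = (vector [\<Delta>, 1] \<bullet> (matrix_inv \<Omega>0 *v e2)) / sqrt (e2 \<bullet> (matrix_inv \<Omega>0 *v e2))"

end

theory Submission
  imports Defs
begin


lemma sym_inner:
  fixes A :: "real^'n^'n"
  assumes "transpose A = A"
  shows "x \<bullet> (A *v y) = (A *v x) \<bullet> y"
proof -
  have "x \<bullet> (A *v y) = (x v* A) \<bullet> y" by (simp add: dot_lmul_matrix)
  also have "x v* A = transpose A *v x" by (simp add: transpose_matrix_vector)
  finally show ?thesis using assms by simp
qed

lemma inv_props:
  fixes A :: "real^'n^'n"
  assumes "invertible A"
  shows "A ** matrix_inv A = mat 1" "matrix_inv A ** A = mat 1"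
proof -
  have "\<exists>A'. A ** A' = mat 1 \<and> A' ** A = mat 1" using assms by (simp add: invertible_def)
  then have "A ** matrix_inv A = mat 1 \<and> matrix_inv A ** A = mat 1"
    unfolding matrix_inv_def by (rule someI_ex)
  then show "A ** matrix_inv A = mat 1" "matrix_inv A ** A = mat 1" by auto
qed

lemma matrix_inv_unique:
  fixes A B :: "real^'n^'n"
  assumes "A ** B = mat 1"
  shows "matrix_inv A = B"
proof -
  have inv: "invertible A" using assms invertible_right_inverse by blast
  have "matrix_inv A = matrix_inv A ** (A ** B)" using assms by simp
  also have "\<dots> = (matrix_inv A ** A) ** B" by (simp add: matrix_mul_assoc)
  also have "\<dots> = B" using inv_props(2)[OF inv] by simp
  finally show ?thesis .
qed

lemma invertible_matrix_inv:
  fixes A :: "real^'n^'n"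
  assumes "invertible A"
  shows "invertible (matrix_inv A)"
  using inv_props[OF assms] invertible_def by blast

lemma pd_invertible:
  fixes A :: "real^'n^'n"
  assumes "pos_def_mat A"
  shows "invertible A"
proof -
  have "\<forall>x. A *v x = 0 \<longrightarrow> x = 0"
  proof (intro allI impI)
    fix x assume "A *v x = 0"
    then have "x \<bullet> (A *v x) = 0" by simp
    then show "x = 0" using assms unfolding pos_def_mat_def by force
  qed
  then show ?thesis using matrix_left_invertible_ker invertible_left_inverse by blast
qed

lemma pd_inv:
  fixes A :: "real^'n^'n"
  assumes "pos_def_mat A"
  shows "pos_def_mat (matrix_inv A)"
proof -
  have inv: "invertible A" by (rule pd_invertible[OF assms])
  have sym: "transpose A = A" using assms pos_def_mat_def by blast
  have "transpose (matrix_inv A) ** A = transpose (matrix_inv A) ** transpose A" using sym by simp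
  also have "\<dots> = transpose (A ** matrix_inv A)" by (simp add: matrix_transpose_mul)
  also have "\<dots> = mat 1" using inv_props(1)[OF inv] by (simp add: transpose_mat)
  finally have "A ** transpose (matrix_inv A) = mat 1" using matrix_left_right_inverse by blast
  then have t: "transpose (matrix_inv A) = matrix_inv A" using matrix_inv_unique by metis
  have "0 < x \<bullet> (matrix_inv A *v x)" if "x \<noteq> 0" for x
  proof -
    define y where "y = matrix_inv A *v x"
    have Ay: "A *v y = x" unfolding y_def using inv_props(1)[OF inv]
      by (simp add: matrix_vector_mul_assoc)
    then have "y \<noteq> 0" using that by auto
    then have "0 < y \<bullet> (A *v y)" using assms unfolding pos_def_mat_def by blast
    also have "y \<bullet> (A *v y) = x \<bullet> (matrix_inv A *v x)" using Ay y_def by (simp add: inner_commute)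
    finally show ?thesis .
  qed
  then show ?thesis using t unfolding pos_def_mat_def by blast
qed



lemma max_eigen:
  fixes A :: "real^'n^'n"
  assumes sym: "transpose A = A" and S: "subspace S" and inv: "\<forall>x\<in>S. A *v x \<in> S"
    and ne: "S \<noteq> {0}"
  obtains v where "v \<in> S" "norm v = 1" "A *v v = (v \<bullet> (A *v v)) *\<^sub>R v"
proof -
  obtain x0 where x0: "x0 \<in> S" "x0 \<noteq> 0" using ne S subspace_0 by blast
  define K where "K = S \<inter> sphere 0 1"
  have cK: "compact K" unfolding K_def
    using closed_subspace[OF S] compact_sphere by (simp add: closed_Int_compact)
  have x0K: "x0 /\<^sub>R norm x0 \<in> K" unfolding K_def using x0 S
    by (simp add: subspace_scale)
  have cont: "continuous_on K (\<lambda>x. x \<bullet> (A *v x))"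
    by (intro continuous_intros linear_continuous_on matrix_vector_mul_linear bounded_linear_inner_right) 
  obtain v where vK: "v \<in> K" and vmax: "\<And>y. y \<in> K \<Longrightarrow> y \<bullet> (A *v y) \<le> v \<bullet> (A *v v)"
    using continuous_attains_sup[OF cK _ cont] x0K by blast
  define m where "m = v \<bullet> (A *v v)"
  have vS: "v \<in> S" and nv: "norm v = 1" using vK K_def by auto
  have vv: "v \<bullet> v = 1" using nv by (simp add: norm_eq_1)
  have bound: "x \<bullet> (A *v x) \<le> m * (x \<bullet> x)" if "x \<in> S" for x
  proof (cases "x = 0")
    case True then show ?thesis by simp
  next
    case False
    define y where "y = x /\<^sub>R norm x"
    have "y \<in> K" unfolding K_def y_def using that False S by (simp add: subspace_scale)
    then have "y \<bullet> (A *v y) \<le> m" using vmax m_def by blast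
    moreover have "x \<bullet> (A *v x) = (norm x)^2 * (y \<bullet> (A *v y))"
      using False by (simp add: y_def matrix_vector_mult_scaleR power2_eq_square field_simps)
    moreover have "x \<bullet> x = (norm x)^2" by (simp add: power2_norm_eq_inner)
    ultimately show ?thesis by (metis mult.commute mult_right_mono zero_le_power2)
  qed
  define g where "g x = m * (x \<bullet> x) - x \<bullet> (A *v x)" for x
  have gnn: "g x \<ge> 0" if "x \<in> S" for x using bound[OF that] g_def by simp
  define z where "z = m *\<^sub>R v - A *v v"
  have zS: "z \<in> S" unfolding z_def using vS inv S by (simp add: subspace_diff subspace_scale)
  have expand: "g (v + t *\<^sub>R z) = 2 * t * (z \<bullet> z) + t^2 * g z" for t
  proof -
    have s: "v \<bullet> (A *v z) = z \<bullet> (A *v v)" using sym_inner[OF sym, of v z] by (simp add: inner_commute)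
    have "g (v + t *\<^sub>R z) = m * (v \<bullet> v + 2 * t * (v \<bullet> z) + t^2 * (z \<bullet> z))
          - (v \<bullet> (A *v v) + t * (v \<bullet> (A *v z)) + t * (z \<bullet> (A *v v)) + t^2 * (z \<bullet> (A *v z)))"
      unfolding g_def
      by (simp add: inner_add_left inner_add_right matrix_vector_right_distrib matrix_vector_mult_scaleR
          power2_eq_square algebra_simps inner_commute)
    also have "\<dots> = 2 * t * (m * (v \<bullet> z) - z \<bullet> (A *v v)) + t^2 * g z"
      using s vv by (simp add: g_def m_def[symmetric] algebra_simps)
    also have "m * (v \<bullet> z) - z \<bullet> (A *v v) = z \<bullet> z"
      unfolding z_def by (simp add: inner_diff_left inner_diff_right inner_commute algebra_simps)
    finally show ?thesis .
  qed
  have "z = 0"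
  proof (rule ccontr)
    assume "z \<noteq> 0"
    then have a: "z \<bullet> z > 0" by simp
    define G where "G = g z"
    have G: "G \<ge> 0" using gnn zS G_def by simp
    define t where "t = - (z \<bullet> z) / (G + 1)"
    have t: "t < 0" using a G t_def by (simp add: divide_neg_pos)
    have "t * G \<ge> - (z \<bullet> z)"
    proof -
      have "t * G = - (z \<bullet> z) * (G / (G + 1))" by (simp add: t_def)
      moreover have "G / (G + 1) \<le> 1" using G by simp
      moreover have "(z \<bullet> z) * (G / (G + 1)) \<le> (z \<bullet> z)" using a \<open>G / (G + 1) \<le> 1\<close>
        by (intro mult_left_le) auto
      ultimately show ?thesis by linarith
    qed
    then have "2 * (z \<bullet> z) + t * G > 0" using a by linarith
    then have "t * (2 * (z \<bullet> z) + t * G) < 0" using t by (simp add: mult_neg_pos)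
    moreover have "g (v + t *\<^sub>R z) = t * (2 * (z \<bullet> z) + t * G)"
      using expand G_def by (simp add: power2_eq_square algebra_simps)
    moreover have "v + t *\<^sub>R z \<in> S" using vS zS S by (simp add: subspace_add subspace_scale)
    ultimately show False using gnn by fastforce
  qed
  then have "A *v v = m *\<^sub>R v" unfolding z_def by simp
  then show ?thesis using that vS nv m_def by blast
qed



lemma eigen_basis_subspace:
  fixes A :: "real^'n^'n"
  assumes sym: "transpose A = A"
  shows "subspace S \<Longrightarrow> (\<forall>x\<in>S. A *v x \<in> S) \<Longrightarrow>
    \<exists>B. B \<subseteq> S \<and> pairwise orthogonal B \<and> (\<forall>b\<in>B. norm b = 1 \<and> A *v b = (b \<bullet> (A *v b)) *\<^sub>R b)
        \<and> span B = S"
proof (induction "dim S" arbitrary: S rule: less_induct)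
  case less
  show ?case
  proof (cases "S = {0}")
    case True
    then show ?thesis by (intro exI[of _ "{}"]) auto
  next
    case False
    obtain v where vS: "v \<in> S" and nv: "norm v = 1" and ev: "A *v v = (v \<bullet> (A *v v)) *\<^sub>R v"
      using max_eigen[OF sym less.prems(1) less.prems(2) False] by blast
    have vv: "v \<bullet> v = 1" using nv by (simp add: norm_eq_1)
    define S' where "S' = S \<inter> {x. orthogonal v x}"
    have sub': "subspace S'" unfolding S'_def
      using less.prems(1) subspace_orthogonal_to_vector[of v] by (simp add: subspace_inter)
    have inv': "\<forall>x\<in>S'. A *v x \<in> S'"
    proof
      fix x assume x: "x \<in> S'"
      have "v \<bullet> (A *v x) = (A *v v) \<bullet> x" by (rule sym_inner[OF sym])
      also have "\<dots> = (v \<bullet> (A *v v)) * (v \<bullet> x)" by (subst ev) simp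
      also have "\<dots> = 0" using x unfolding S'_def by (simp add: orthogonal_def)
      finally show "A *v x \<in> S'" using x less.prems(2) unfolding S'_def by (simp add: orthogonal_def)
    qed
    have vnot: "v \<notin> span S'"
    proof
      assume "v \<in> span S'"
      then have "v \<in> S'" using sub' by (metis span_eq_iff)
      then show False using vv unfolding S'_def orthogonal_def by simp
    qed
    have "insert v S' \<subseteq> S" using vS S'_def by auto
    then have "dim (insert v S') \<le> dim S"
      by (intro dim_mono) (auto intro: span_base)
    then have dlt: "dim S' < dim S" using vnot by (simp add: dim_insert)
    obtain B' where B'S: "B' \<subseteq> S'" and po: "pairwise orthogonal B'"
      and Bp: "\<forall>b\<in>B'. norm b = 1 \<and> A *v b = (b \<bullet> (A *v b)) *\<^sub>R b" and sp: "span B' = S'"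
      using less.hyps[OF dlt sub' inv'] by blast
    define B where "B = insert v B'"
    have "B \<subseteq> S" using B'S vS S'_def B_def by auto
    moreover have "pairwise orthogonal B" unfolding B_def
      using po B'S S'_def by (auto simp: pairwise_insert orthogonal_commute)
    moreover have "\<forall>b\<in>B. norm b = 1 \<and> A *v b = (b \<bullet> (A *v b)) *\<^sub>R b"
      using Bp nv ev B_def by auto
    moreover have "span B = S"
    proof
      show "span B \<subseteq> S" using \<open>B \<subseteq> S\<close> less.prems(1) by (simp add: span_minimal)
      show "S \<subseteq> span B"
      proof
        fix x assume x: "x \<in> S"
        have "x - (v \<bullet> x) *\<^sub>R v \<in> S'" unfolding S'_def using x vS less.prems(1) vv
          by (simp add: subspace_diff subspace_scale orthogonal_def inner_diff_right)
        then have "x - (v \<bullet> x) *\<^sub>R v \<in> span B'" using sp by simp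
        then show "x \<in> span B" unfolding B_def using span_breakdown_eq by blast
      qed
    qed
    ultimately show ?thesis by blast
  qed
qed



lemma sqrt_exists_unique:
  fixes C :: "real^'n^'n"
  assumes pd: "pos_def_mat C"
  shows "\<exists>!M. pos_def_mat M \<and> M ** M = C"
proof -
  have sym: "transpose C = C" using pd pos_def_mat_def by blast
  obtain B where po: "pairwise orthogonal B"
      and Bp: "\<forall>b\<in>B. norm b = 1 \<and> C *v b = (b \<bullet> (C *v b)) *\<^sub>R b" and sp: "span B = UNIV"
    using eigen_basis_subspace[OF sym, of UNIV] by auto
  have "0 \<notin> B" using Bp by fastforce
  then have fin: "finite B" using pairwise_orthogonal_independent[OF po] independent_imp_finite by blast
  define lam where "lam b = b \<bullet> (C *v b)" for b
  have lampos: "lam b > 0" if "b \<in> B" for b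
  proof -
    have "b \<noteq> 0" using that \<open>0 \<notin> B\<close> by blast
    then show ?thesis using pd unfolding pos_def_mat_def lam_def by blast
  qed
  have eig: "C *v b = lam b *\<^sub>R b" if "b \<in> B" for b unfolding lam_def using Bp that by blast
  define s where "s b = sqrt (lam b)" for b
  have spos: "s b > 0" if "b \<in> B" for b using lampos[OF that] s_def by simp
  have ss: "s b * s b = lam b" if "b \<in> B" for b using lampos[OF that] s_def by simp
  have on: "b \<bullet> b' = (if b = b' then 1 else 0)" if "b \<in> B" "b' \<in> B" for b b'
    using po Bp that by (auto simp: pairwise_def orthogonal_def norm_eq_1)
  define M where "M = (\<chi> i j. \<Sum>b\<in>B. s b * b$i * b$j)"
  have Mv: "M *v x = (\<Sum>b\<in>B. (s b * (b \<bullet> x)) *\<^sub>R b)" for x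
    unfolding M_def
    by (simp add: vec_eq_iff matrix_vector_mult_def inner_vec_def sum_distrib_left sum_distrib_right
        sum_component mult_ac sum.swap[of _ UNIV])
  have Mb: "M *v b' = s b' *\<^sub>R b'" if "b' \<in> B" for b'
  proof -
    have "M *v b' = (\<Sum>b\<in>B. if b = b' then s b' *\<^sub>R b' else 0)"
      unfolding Mv by (rule sum.cong) (use that on in auto)
    also have "\<dots> = s b' *\<^sub>R b'" using fin that by (simp add: sum.delta')
    finally show ?thesis .
  qed
  have Msym: "transpose M = M" unfolding M_def by (simp add: vec_eq_iff transpose_def mult_ac)
  have Mpd: "pos_def_mat M"
    unfolding pos_def_mat_def
  proof (intro conjI allI impI Msym)
    fix x :: "real^'n" assume x: "x \<noteq> 0"
    have "\<exists>b\<in>B. b \<bullet> x \<noteq> 0"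
    proof (rule ccontr)
      assume "\<not> ?thesis"
      then have "orthogonal x x" using orthogonal_to_span[of x B x] sp
        by (auto simp: orthogonal_def inner_commute)
      then show False using x by (simp add: orthogonal_def)
    qed
    then obtain b0 where b0: "b0 \<in> B" "b0 \<bullet> x \<noteq> 0" by blast
    have "x \<bullet> (M *v x) = (\<Sum>b\<in>B. s b * (b \<bullet> x)^2)"
      unfolding Mv by (simp add: inner_sum_right power2_eq_square inner_commute mult_ac)
    also have "\<dots> > 0"
    proof (rule sum_pos2[OF fin b0(1)])
      show "0 < s b0 * (b0 \<bullet> x)\<^sup>2" using b0 spos by simp
      show "0 \<le> s i * (i \<bullet> x)\<^sup>2" if "i \<in> B" for i using spos[OF that] by simp
    qed
    finally show "0 < x \<bullet> (M *v x)" .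
  qed
  have lin: "linear ((*v) (A::real^'n^'n))" for A by (rule matrix_vector_mul_linear)
  have MM: "M ** M = C"
  proof -
    have "(M ** M) *v x = C *v x" for x
    proof (rule linear_eq_on_span[OF lin lin])
      fix b assume b: "b \<in> B"
      have "(M ** M) *v b = M *v (M *v b)" by (simp add: matrix_vector_mul_assoc)
      also have "\<dots> = (s b * s b) *\<^sub>R b" using Mb[OF b] by (simp add: matrix_vector_mult_scaleR)
      also have "\<dots> = C *v b" using ss[OF b] eig[OF b] by simp
      finally show "(M ** M) *v b = C *v b" .
    next
      show "x \<in> span B" using sp by simp
    qed
    then show ?thesis by (simp add: matrix_eq)
  qed
  have uniq: "N = M" if N: "pos_def_mat N" "N ** N = C" for N
  proof -
    have "N *v x = M *v x" for x
    proof (rule linear_eq_on_span[OF lin lin])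
      fix b assume b: "b \<in> B"
      define y where "y = N *v b - s b *\<^sub>R b"
      have "N *v y + s b *\<^sub>R y = N *v (N *v b) - (s b * s b) *\<^sub>R b"
        unfolding y_def by (simp add: matrix_vector_mult_diff_distrib matrix_vector_mult_scaleR algebra_simps)
      also have "N *v (N *v b) = C *v b" using N(2) by (simp add: matrix_vector_mul_assoc)
      also have "\<dots> = (s b * s b) *\<^sub>R b" using ss[OF b] eig[OF b] by simp
      finally have e: "N *v y + s b *\<^sub>R y = 0" by simp
      have "y = 0"
      proof (rule ccontr)
        assume "y \<noteq> 0"
        then have "0 < y \<bullet> (N *v y)" "0 < y \<bullet> y" using N(1) unfolding pos_def_mat_def by auto
        moreover have "y \<bullet> (N *v y) + s b * (y \<bullet> y) = 0"
          using arg_cong[OF e, of "\<lambda>z. y \<bullet> z"] by (simp add: inner_add_right)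
        ultimately show False using spos[OF b] by (smt (verit) mult_pos_pos)
      qed
      then show "N *v b = M *v b" using Mb[OF b] y_def by simp
    next
      show "x \<in> span B" using sp by simp
    qed
    then show ?thesis by (simp add: matrix_eq)
  qed
  show ?thesis using Mpd MM uniq by blast
qed

lemma inv_sqrt_props:
  fixes \<Phi> :: "real^'n^'n"
  assumes "pos_def_mat \<Phi>"
  shows "pos_def_mat (inv_sqrt_mat \<Phi>)" "inv_sqrt_mat \<Phi> ** inv_sqrt_mat \<Phi> = matrix_inv \<Phi>"
proof -
  have "pos_def_mat (inv_sqrt_mat \<Phi>) \<and> inv_sqrt_mat \<Phi> ** inv_sqrt_mat \<Phi> = matrix_inv \<Phi>"
    unfolding inv_sqrt_mat_def by (rule theI'[OF sqrt_exists_unique[OF pd_inv[OF assms]]])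
  then show "pos_def_mat (inv_sqrt_mat \<Phi>)" "inv_sqrt_mat \<Phi> ** inv_sqrt_mat \<Phi> = matrix_inv \<Phi>"
    by auto
qed



lemma orth_mat_of_transf:
  fixes f :: "real^'n \<Rightarrow> real^'n"
  assumes "orthogonal_transformation f"
  shows "orthogonal_matrix (matrix f)" "\<And>x. matrix f *v x = f x"
proof -
  have lf: "linear f" using assms orthogonal_transformation_def by blast
  show "orthogonal_matrix (matrix f)" using assms orthogonal_transformation_matrix by blast
  show "\<And>x. matrix f *v x = f x" using matrix_vector_mul(2)[OF lf] by metis
qed

lemma two_vec_orth:
  fixes a1 a2 b1 b2 :: "real^'n"
  assumes e1: "a1 \<bullet> a1 = b1 \<bullet> b1" and e12: "a1 \<bullet> a2 = b1 \<bullet> b2" and e2: "a2 \<bullet> a2 = b2 \<bullet> b2"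
  obtains U where "orthogonal_matrix U" "U *v a1 = b1" "U *v a2 = b2"
proof -
  have "norm a1 = norm b1" using e1 by (simp add: norm_eq_sqrt_inner)
  then obtain f1 where f1: "orthogonal_transformation f1" "f1 a1 = b1"
    using orthogonal_transformation_exists by blast
  have f1i: "f1 v \<bullet> f1 w = v \<bullet> w" for v w using f1(1) orthogonal_transformation_def by blast
  define c where "c = f1 a2"
  have cb1: "c \<bullet> b1 = b2 \<bullet> b1" using f1i[of a2 a1] f1(2) e12 c_def by (simp add: inner_commute)
  have cc: "c \<bullet> c = b2 \<bullet> b2" using f1i[of a2 a2] e2 c_def by simp
  define z where "z = c - b2"
  define H where "H x = x - (2 * (z \<bullet> x) / (z \<bullet> z)) *\<^sub>R z" for x
  have linH: "linear H"
    by (rule linearI) (simp_all add: H_def inner_add_right inner_scaleR_right algebra_simps add_divide_distrib)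
  have Hi: "H v \<bullet> H w = v \<bullet> w" for v w
  proof (cases "z = 0")
    case True then show ?thesis by (simp add: H_def)
  next
    case False
    then have zz: "z \<bullet> z \<noteq> 0" by simp
    show ?thesis unfolding H_def using zz
      by (simp add: inner_diff_left inner_diff_right inner_scaleR_left inner_scaleR_right inner_commute
          field_simps power2_eq_square) 
  qed
  have oH: "orthogonal_transformation H" using linH Hi orthogonal_transformation_def by blast
  have Hc: "H c = b2"
  proof (cases "z = 0")
    case True then show ?thesis by (simp add: H_def z_def)
  next
    case False
    then have zz: "z \<bullet> z \<noteq> 0" by simp
    have "z \<bullet> z = 2 * (z \<bullet> c)" unfolding z_def using cc
      by (simp add: inner_diff_left inner_diff_right inner_commute algebra_simps)
    then have q: "2 * (z \<bullet> c) / (z \<bullet> z) = 1" using zz by (metis divide_self)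
    have "H c = c - (2 * (z \<bullet> c) / (z \<bullet> z)) *\<^sub>R z" by (simp add: H_def)
    also have "\<dots> = c - z" by (simp only: q scaleR_one)
    finally show ?thesis by (simp add: z_def)
  qed
  have Hb1: "H b1 = b1"
  proof -
    have "z \<bullet> b1 = 0" unfolding z_def using cb1 by (simp add: inner_diff_left)
    then show ?thesis by (simp add: H_def)
  qed
  have o: "orthogonal_transformation (H \<circ> f1)" by (rule orthogonal_transformation_compose[OF oH f1(1)])
  show ?thesis
  proof (rule that[of "matrix (H \<circ> f1)"])
    show "orthogonal_matrix (matrix (H \<circ> f1))" by (rule orth_mat_of_transf(1)[OF o])
    show "matrix (H \<circ> f1) *v a1 = b1" using orth_mat_of_transf(2)[OF o] f1(2) Hb1 by simp
    show "matrix (H \<circ> f1) *v a2 = b2" using orth_mat_of_transf(2)[OF o] Hc c_def by simp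
  qed
qed



declare transpose_matrix_vector[simp del]

lemma inner_transpose:
  fixes A :: "real^'n^'m"
  shows "(A *v x) \<bullet> y = x \<bullet> (transpose A *v y)"
proof -
  have "(A *v x) \<bullet> y = (x v* transpose A) \<bullet> y" by (metis transpose_matrix_vector transpose_transpose)
  also have "\<dots> = x \<bullet> (transpose A *v y)" by (rule dot_lmul_matrix)
  finally show ?thesis .
qed

lemma pd_sym: "pos_def_mat A \<Longrightarrow> transpose A = A" by (simp add: pos_def_mat_def)

lemma pd_congr:
  fixes \<Phi> g :: "real^'n^'n"
  assumes pd: "pos_def_mat \<Phi>" and g: "invertible g"
  shows "pos_def_mat (g ** \<Phi> ** transpose g)"
  unfolding pos_def_mat_def
proof (intro conjI allI impI)
  show "transpose (g ** \<Phi> ** transpose g) = g ** \<Phi> ** transpose g"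
    using pd_sym[OF pd] by (simp add: matrix_transpose_mul matrix_mul_assoc)
  fix x :: "real^'n" assume x: "x \<noteq> 0"
  have "transpose g *v x \<noteq> 0"
  proof
    assume "transpose g *v x = 0"
    then have "transpose (matrix_inv g) *v (transpose g *v x) = 0" by simp
    moreover have "transpose (matrix_inv g) ** transpose g = mat 1"
      using inv_props(1)[OF g] by (metis matrix_transpose_mul transpose_mat)
    ultimately show False using x by (simp add: matrix_vector_mul_assoc)
  qed
  then have "0 < (transpose g *v x) \<bullet> (\<Phi> *v (transpose g *v x))" using pd pos_def_mat_def by blast
  also have "\<dots> = x \<bullet> ((g ** \<Phi> ** transpose g) *v x)"
    by (simp add: inner_transpose matrix_vector_mul_assoc matrix_mul_assoc)
  finally show "0 < x \<bullet> ((g ** \<Phi> ** transpose g) *v x)" .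
qed

lemma inv_congr:
  fixes \<Phi> g :: "real^'n^'n"
  assumes pd: "pos_def_mat \<Phi>" and g: "invertible g"
  shows "matrix_inv (g ** \<Phi> ** transpose g) = transpose (matrix_inv g) ** matrix_inv \<Phi> ** matrix_inv g"
proof (rule matrix_inv_unique)
  have t: "transpose g ** transpose (matrix_inv g) = mat 1"
    using inv_props(2)[OF g] by (metis matrix_transpose_mul transpose_mat)
  have p: "\<Phi> ** matrix_inv \<Phi> = mat 1" using inv_props(1)[OF pd_invertible[OF pd]] .
  have gg: "g ** matrix_inv g = mat 1" using inv_props(1)[OF g] .
  have "g ** \<Phi> ** transpose g ** (transpose (matrix_inv g) ** matrix_inv \<Phi> ** matrix_inv g)
      = g ** (\<Phi> ** ((transpose g ** transpose (matrix_inv g)) ** matrix_inv \<Phi>) ** matrix_inv g)"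
    by (simp add: matrix_mul_assoc)
  also have "\<dots> = mat 1" using t p gg by (simp add: matrix_mul_assoc)
  finally show "g ** \<Phi> ** transpose g ** (transpose (matrix_inv g) ** matrix_inv \<Phi> ** matrix_inv g) = mat 1" .
qed

lemma bil_inv:
  fixes \<Phi> g :: "real^'n^'n"
  assumes pd: "pos_def_mat \<Phi>" and g: "invertible g"
  shows "(g *v x) \<bullet> (matrix_inv (g ** \<Phi> ** transpose g) *v (g *v y)) = x \<bullet> (matrix_inv \<Phi> *v y)"
proof -
  have t: "transpose g ** transpose (matrix_inv g) = mat 1"
    using inv_props(2)[OF g] by (metis matrix_transpose_mul transpose_mat)
  have gg: "matrix_inv g ** g = mat 1" using inv_props(2)[OF g] .
  have "(g *v x) \<bullet> (matrix_inv (g ** \<Phi> ** transpose g) *v (g *v y))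
     = x \<bullet> (((transpose g ** transpose (matrix_inv g)) ** matrix_inv \<Phi> ** (matrix_inv g ** g)) *v y)"
    unfolding inv_congr[OF pd g] by (simp add: inner_transpose matrix_vector_mul_assoc matrix_mul_assoc)
  also have "\<dots> = x \<bullet> (matrix_inv \<Phi> *v y)" using t gg by simp
  finally show ?thesis .
qed

lemma sqrt_inner:
  fixes \<Phi> :: "real^'n^'n"
  assumes pd: "pos_def_mat \<Phi>"
  shows "(inv_sqrt_mat \<Phi> *v x) \<bullet> (inv_sqrt_mat \<Phi> *v y) = x \<bullet> (matrix_inv \<Phi> *v y)"
  using inv_sqrt_props[OF pd] pd_sym[OF inv_sqrt_props(1)[OF pd]]
  by (simp add: inner_transpose matrix_vector_mul_assoc)

lemma sqrt_facts:
  fixes \<Phi> :: "real^'n^'n"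
  assumes pd: "pos_def_mat \<Phi>"
  defines "M \<equiv> inv_sqrt_mat \<Phi>"
  shows "invertible M" "transpose M = M" "matrix_inv M = \<Phi> ** M"
    "M ** (\<Phi> ** (M ** X)) = X" "Y ** M ** \<Phi> ** M ** X = Y ** X" "matrix_inv M ** transpose (matrix_inv M) = \<Phi>"
proof -
  have Mpd: "pos_def_mat M" and MM: "M ** M = matrix_inv \<Phi>" using inv_sqrt_props[OF pd] M_def by auto
  show "invertible M" by (rule pd_invertible[OF Mpd])
  show Ms: "transpose M = M" by (rule pd_sym[OF Mpd])
  have p1: "\<Phi> ** matrix_inv \<Phi> = mat 1" and p2: "matrix_inv \<Phi> ** \<Phi> = mat 1"
    using inv_props[OF pd_invertible[OF pd]] by auto
  have "M ** (M ** \<Phi>) = mat 1" using MM p2 by (simp add: matrix_mul_assoc)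
  then have "(M ** \<Phi>) ** M = mat 1" using matrix_left_right_inverse by blast
  then have MPM: "M ** (\<Phi> ** M) = mat 1" by (simp add: matrix_mul_assoc)
  show Mi: "matrix_inv M = \<Phi> ** M" by (rule matrix_inv_unique[OF MPM])
  show "M ** (\<Phi> ** (M ** X)) = X" using MPM by (simp add: matrix_mul_assoc)
  show "Y ** M ** \<Phi> ** M ** X = Y ** X" using MPM by (simp add: matrix_mul_assoc[symmetric])
  have "matrix_inv M ** transpose (matrix_inv M) = \<Phi> ** (M ** M) ** \<Phi>"
    unfolding Mi using Ms pd_sym[OF pd] by (simp add: matrix_transpose_mul matrix_mul_assoc)
  also have "\<dots> = \<Phi>" using MM p1 by simp
  finally show "matrix_inv M ** transpose (matrix_inv M) = \<Phi>" .
qed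

lemma orth_invertible: "orthogonal_matrix (U::real^'n^'n) \<Longrightarrow> invertible U"
  unfolding orthogonal_matrix_def invertible_def by blast

lemma transport:
  fixes \<Phi> \<Phi>' U :: "real^'n^'n"
  assumes pd: "pos_def_mat \<Phi>" and pd': "pos_def_mat \<Phi>'" and U: "orthogonal_matrix U"
  defines "g \<equiv> matrix_inv (inv_sqrt_mat \<Phi>') ** U ** inv_sqrt_mat \<Phi>"
  shows "invertible g" "g ** \<Phi> ** transpose g = \<Phi>'"
proof -
  let ?M = "inv_sqrt_mat \<Phi>" and ?M' = "inv_sqrt_mat \<Phi>'"
  show "invertible g" unfolding g_def
    by (intro invertible_mult invertible_matrix_inv orth_invertible U sqrt_facts(1) pd pd')
  have UU: "U ** transpose U = mat 1" using U orthogonal_matrix_def by blast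
  have "g ** \<Phi> ** transpose g = (matrix_inv ?M' ** U) ** ?M ** \<Phi> ** ?M ** (transpose U ** transpose (matrix_inv ?M'))"
    unfolding g_def using sqrt_facts(2)[OF pd] by (simp add: matrix_transpose_mul matrix_mul_assoc)
  also have "\<dots> = (matrix_inv ?M' ** U) ** (transpose U ** transpose (matrix_inv ?M'))"
    by (rule sqrt_facts(5)[OF pd])
  also have "\<dots> = matrix_inv ?M' ** ((U ** transpose U) ** transpose (matrix_inv ?M'))"
    by (simp add: matrix_mul_assoc)
  also have "\<dots> = \<Phi>'" using UU sqrt_facts(6)[OF pd'] by simp
  finally show "g ** \<Phi> ** transpose g = \<Phi>'" .
qed



lemma sign_pair:
  fixes p q p' q' :: real
  assumes "p^2 = p'^2" "p * q = p' * q'" "q^2 = q'^2"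
  shows "(p = p' \<and> q = q') \<or> (p = -p' \<and> q = -q')"
proof -
  have pp: "p = p' \<or> p = -p'" using assms(1) by (simp add: power2_eq_iff)
  have qq: "q = q' \<or> q = -q'" using assms(3) by (simp add: power2_eq_iff)
  show ?thesis
  proof (cases "p = 0")
    case True then show ?thesis using pp qq by auto
  next
    case False
    show ?thesis using pp
    proof
      assume h: "p = p'" then have "q = q'" using assms(2) False by simp
      then show ?thesis using h by simp
    next
      assume h: "p = -p'"
      then have "p' * (-q) = p' * q'" using assms(2) by simp
      moreover have "p' \<noteq> 0" using False h by simp
      ultimately have "-q = q'" using mult_left_cancel[of p' "-q" q'] by blast
      then have "q = -q'" by simp
      then show ?thesis using h by simp
    qed
  qed
qed

lemma real_part:
  fixes D D' l l' a b s1 s2 :: real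
  assumes s1: "s1 > 0" and s2: "s2 > 0" and b: "b > 0" and l: "l > 0" and l': "l' > 0"
    and h1: "(D/s1)^2 * l = (D'/s1)^2 * l'"
    and h2: "(D/s1) * ((D*a+b)/s2) * l = (D'/s1) * ((D'*a+b)/s2) * l'"
    and h3: "((D*a+b)/s2)^2 * l = ((D'*a+b)/s2)^2 * l'"
  shows "D = D' \<and> l = l'"
proof -
  define r where "r = sqrt l"
  define r' where "r' = sqrt l'"
  have r: "r > 0" "r^2 = l" using l r_def by auto
  have r': "r' > 0" "r'^2 = l'" using l' r'_def by auto
  define p where "p = D/s1 * r"
  define q where "q = (D*a+b)/s2 * r"
  define p' where "p' = D'/s1 * r'"
  define q' where "q' = (D'*a+b)/s2 * r'"
  have "p^2 = (D/s1)^2 * r^2" "p'^2 = (D'/s1)^2 * r'^2" unfolding p_def p'_def by (simp_all only: power_mult_distrib)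
  then have e1: "p^2 = p'^2" using h1 r r' by simp
  have "p * q = (D/s1) * ((D*a+b)/s2) * r^2" "p' * q' = (D'/s1) * ((D'*a+b)/s2) * r'^2"
    by (simp_all add: p_def q_def p'_def q'_def power2_eq_square mult_ac)
  then have e2: "p * q = p' * q'" using h2 r r' by simp
  have "q^2 = ((D*a+b)/s2)^2 * r^2" "q'^2 = ((D'*a+b)/s2)^2 * r'^2" unfolding q_def q'_def by (simp_all only: power_mult_distrib)
  then have e3: "q^2 = q'^2" using h3 r r' by simp
  have lin: "q * s2 = a * s1 * p + b * r" unfolding p_def q_def using s1 s2
    by (simp add: field_simps)
  have lin': "q' * s2 = a * s1 * p' + b * r'" unfolding p'_def q'_def using s1 s2
    by (simp add: field_simps)
  have br: "b * r > 0" "b * r' > 0" using b r r' by simp_all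
  from sign_pair[OF e1 e2 e3] show ?thesis
  proof
    assume h: "p = p' \<and> q = q'"
    then have "q' * s2 = a * s1 * p' + b * r" using lin by simp
    then have "b * r = b * r'" using lin' by linarith
    then have rr: "r = r'" using b by simp
    have "l = l'" using r(2) r'(2) rr by simp
    moreover have "D / s1 * r = D' / s1 * r" using h rr unfolding p_def p'_def by simp
    then have "D = D'" using r s1 by simp
    ultimately show ?thesis by simp
  next
    assume h: "p = -p' \<and> q = -q'"
    then have "(-q') * s2 = a * s1 * (-p') + b * r" using lin by simp
    then have "-(q' * s2) = -(a * s1 * p') + b * r" by simp
    then show ?thesis using lin' br by linarith
  qed
qed


lemma Q_entries:
  "Q_stat R0 \<Omega> \<Phi> $ i $ j =
     (if i = 1 then S_stat R0 \<Omega> \<Phi> else T_stat R0 \<Omega> \<Phi>) \<bullet> (if j = 1 then S_stat R0 \<Omega> \<Phi> else T_stat R0 \<Omega> \<Phi>)"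
  unfolding Q_stat_def Let_def
  using exhaust_2[of i] exhaust_2[of j]
  by (auto simp: matrix_matrix_mult_def transpose_def inner_vec_def)

lemma Q_eq_iff:
  "Q_stat R0 \<Omega> \<Phi> = Q_stat R0' \<Omega>' \<Phi>' \<longleftrightarrow>
    S_stat R0 \<Omega> \<Phi> \<bullet> S_stat R0 \<Omega> \<Phi> = S_stat R0' \<Omega>' \<Phi>' \<bullet> S_stat R0' \<Omega>' \<Phi>' \<and>
    S_stat R0 \<Omega> \<Phi> \<bullet> T_stat R0 \<Omega> \<Phi> = S_stat R0' \<Omega>' \<Phi>' \<bullet> T_stat R0' \<Omega>' \<Phi>' \<and>
    T_stat R0 \<Omega> \<Phi> \<bullet> T_stat R0 \<Omega> \<Phi> = T_stat R0' \<Omega>' \<Phi>' \<bullet> T_stat R0' \<Omega>' \<Phi>'"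
  by (simp add: vec_eq_iff forall_2 Q_entries inner_commute)



lemma e1_inner: "e1 \<bullet> (v::real^2) = v$1" by (simp add: e1_def inner_vec_def sum_2)
lemma e2_inner: "e2 \<bullet> (v::real^2) = v$2" by (simp add: e2_def inner_vec_def sum_2)
lemma vec_inner: "vector [D, 1] \<bullet> (v::real^2) = D * v$1 + v$2" by (simp add: inner_vec_def sum_2)

lemma e1_pos: "pos_def_mat \<Omega> \<Longrightarrow> e1 \<bullet> (\<Omega> *v e1) > 0"
proof -
  assume "pos_def_mat \<Omega>"
  moreover have "e1 \<noteq> 0" by (simp add: e1_def vec_eq_iff forall_2)
  ultimately show ?thesis unfolding pos_def_mat_def by blast
qed

lemma w2_pos: "pos_def_mat \<Omega> \<Longrightarrow> e2 \<bullet> (matrix_inv \<Omega> *v e2) > 0"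
proof -
  assume "pos_def_mat \<Omega>"
  then have "pos_def_mat (matrix_inv \<Omega>)" by (rule pd_inv)
  moreover have "e2 \<noteq> 0" by (simp add: e2_def vec_eq_iff forall_2)
  ultimately show ?thesis unfolding pos_def_mat_def by blast
qed

lemma stat_inner:
  fixes \<Phi> :: "real^'n^'n"
  assumes "pos_def_mat \<Phi>"
  shows "(a *\<^sub>R (inv_sqrt_mat \<Phi> *v p)) \<bullet> (b *\<^sub>R (inv_sqrt_mat \<Phi> *v q)) = a * b * (p \<bullet> (matrix_inv \<Phi> *v q))"
  using sqrt_inner[OF assms] by simp

lemma span_two:
  fixes w :: "real^2"
  assumes "w$2 \<noteq> 0"
  shows "x \<in> span {e1, w}"
proof -
  have "x = (x$1 - (x$2 / w$2) * w$1) *\<^sub>R e1 + (x$2 / w$2) *\<^sub>R w"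
    using assms by (simp add: vec_eq_iff forall_2 e1_def algebra_simps)
  also have "\<dots> \<in> span {e1, w}"
    by (intro span_add span_scale span_base) auto
  finally show ?thesis .
qed

theorem theorem1:
  shows "maximal_invariant {g1 :: real^'k^'k. invertible g1} sample_act
           (sample_space :: ((real^2^'k) \<times> (real^2^2) \<times> (real^'k^'k)) set)
           (\<lambda>(R0, \<Omega>0, \<Phi>). (Q_stat R0 \<Omega>0 \<Phi>, \<Omega>0))
     \<and> maximal_invariant {g1 :: real^'k^'k. invertible g1} param_act
           {(\<Delta>, \<mu>, \<Omega>0, \<Phi>). \<mu> \<noteq> (0 :: real^'k) \<and> pos_def_mat \<Omega>0 \<and> pos_def_mat (\<Phi> :: real^'k^'k)}
           (\<lambda>(\<Delta>, \<mu>, \<Omega>0, \<Phi>).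
              let c = c_par \<Delta> \<Omega>0; d = d_par \<Delta> \<Omega>0; l = lambda_par \<mu> \<Phi>
              in (c\<^sup>2 * l, c * d * l, d\<^sup>2 * l, \<Omega>0))"
proof
  have Qinv: "Q_stat (g ** R0) \<Omega> (g ** \<Phi> ** transpose g) = Q_stat R0 \<Omega> \<Phi>"
    if g: "invertible g" and pd: "pos_def_mat \<Phi>"
    for g :: "real^'k^'k" and R0 :: "real^2^'k" and \<Omega> \<Phi>
  proof -
    have pdg: "pos_def_mat (g ** \<Phi> ** transpose g)" by (rule pd_congr[OF pd g])
    have key: "((g ** R0) *v p) \<bullet> (matrix_inv (g ** \<Phi> ** transpose g) *v ((g ** R0) *v q))
        = (R0 *v p) \<bullet> (matrix_inv \<Phi> *v (R0 *v q))" for p q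
      using bil_inv[OF pd g] by (simp add: matrix_vector_mul_assoc[symmetric])
    show ?thesis unfolding Q_eq_iff S_stat_def T_stat_def
      by (simp only: stat_inner[OF pd] stat_inner[OF pdg] key)
  qed
  show "maximal_invariant {g1 :: real^'k^'k. invertible g1} sample_act
           (sample_space :: ((real^2^'k) \<times> (real^2^2) \<times> (real^'k^'k)) set)
           (\<lambda>(R0, \<Omega>0, \<Phi>). (Q_stat R0 \<Omega>0 \<Phi>, \<Omega>0))"
    unfolding maximal_invariant_def
  proof (intro conjI ballI impI)
    fix g :: "real^'k^'k" and x :: "(real^2^'k) \<times> (real^2^2) \<times> (real^'k^'k)"
    assume g: "g \<in> {g1. invertible g1}" and x: "x \<in> sample_space"
    obtain R0 \<Omega> \<Phi> where xe: "x = (R0, \<Omega>, \<Phi>)" by (cases x) auto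
    have pd: "pos_def_mat \<Phi>" using x unfolding xe sample_space_def by auto
    show "(case sample_act g x of (R0, \<Omega>0, \<Phi>) \<Rightarrow> (Q_stat R0 \<Omega>0 \<Phi>, \<Omega>0)) =
          (case x of (R0, \<Omega>0, \<Phi>) \<Rightarrow> (Q_stat R0 \<Omega>0 \<Phi>, \<Omega>0))"
      unfolding xe sample_act_def using Qinv g pd by simp
  next
    fix x y :: "(real^2^'k) \<times> (real^2^2) \<times> (real^'k^'k)"
    assume x: "x \<in> sample_space" and y: "y \<in> sample_space"
      and eq: "(case x of (R0, \<Omega>0, \<Phi>) \<Rightarrow> (Q_stat R0 \<Omega>0 \<Phi>, \<Omega>0)) =
               (case y of (R0, \<Omega>0, \<Phi>) \<Rightarrow> (Q_stat R0 \<Omega>0 \<Phi>, \<Omega>0))"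
    obtain R0 \<Omega> \<Phi> where xe: "x = (R0, \<Omega>, \<Phi>)" by (cases x) auto
    obtain R0' \<Omega>' \<Phi>' where ye: "y = (R0', \<Omega>', \<Phi>')" by (cases y) auto
    have pd: "pos_def_mat \<Phi>" and pdO: "pos_def_mat \<Omega>" using x unfolding xe sample_space_def by auto
    have pd': "pos_def_mat \<Phi>'" using y unfolding ye sample_space_def by auto
    have OO: "\<Omega>' = \<Omega>" and QQ: "Q_stat R0 \<Omega> \<Phi> = Q_stat R0' \<Omega> \<Phi>'" using eq xe ye by auto
    define S where "S = S_stat R0 \<Omega> \<Phi>"
    define T where "T = T_stat R0 \<Omega> \<Phi>"
    define S' where "S' = S_stat R0' \<Omega> \<Phi>'"
    define T' where "T' = T_stat R0' \<Omega> \<Phi>'"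
    obtain U where U: "orthogonal_matrix U" "U *v S = S'" "U *v T = T'"
      using QQ unfolding Q_eq_iff S_def[symmetric] T_def[symmetric] S'_def[symmetric] T'_def[symmetric]
      by (metis two_vec_orth)
    let ?M = "inv_sqrt_mat \<Phi>" and ?M' = "inv_sqrt_mat \<Phi>'"
    define s1 where "s1 = sqrt (e1 \<bullet> (\<Omega> *v e1))"
    define w where "w = matrix_inv \<Omega> *v e2"
    define s2 where "s2 = sqrt (e2 \<bullet> w)"
    have s1: "s1 > 0" using e1_pos[OF pdO] s1_def by simp
    have w2: "w$2 > 0" using w2_pos[OF pdO] w_def e2_inner by simp
    have s2: "s2 > 0" using w2_pos[OF pdO] s2_def w_def by simp
    have Se: "S = (1/s1) *\<^sub>R (?M *v (R0 *v e1))" "S' = (1/s1) *\<^sub>R (?M' *v (R0' *v e1))"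
      unfolding S_def S'_def S_stat_def s1_def by simp_all
    have Te: "T = (1/s2) *\<^sub>R (?M *v (R0 *v w))" "T' = (1/s2) *\<^sub>R (?M' *v (R0' *v w))"
      unfolding T_def T'_def T_stat_def s2_def w_def by simp_all
    have a1: "(U ** ?M ** R0) *v e1 = (?M' ** R0') *v e1"
    proof -
      have "(1/s1) *\<^sub>R (U *v (?M *v (R0 *v e1))) = (1/s1) *\<^sub>R (?M' *v (R0' *v e1))"
        using U(2) Se by (simp add: matrix_vector_mult_scaleR)
      then show ?thesis using s1 by (simp add: matrix_vector_mul_assoc[symmetric])
    qed
    have a2: "(U ** ?M ** R0) *v w = (?M' ** R0') *v w"
    proof -
      have "(1/s2) *\<^sub>R (U *v (?M *v (R0 *v w))) = (1/s2) *\<^sub>R (?M' *v (R0' *v w))"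
        using U(3) Te by (simp add: matrix_vector_mult_scaleR)
      then show ?thesis using s2 by (simp add: matrix_vector_mul_assoc[symmetric])
    qed
    have lin: "linear ((*v) (A::real^2^'k))" for A by (rule matrix_vector_mul_linear)
    have "(U ** ?M ** R0) *v v = (?M' ** R0') *v v" for v
      by (rule linear_eq_on_span[OF lin lin, of "{e1, w}"]) (use a1 a2 span_two w2 in auto)
    then have UMR: "U ** ?M ** R0 = ?M' ** R0'" by (simp add: matrix_eq)
    define g where "g = matrix_inv ?M' ** U ** ?M"
    have gi: "invertible g" and gP: "g ** \<Phi> ** transpose g = \<Phi>'"
      using transport[OF pd pd' U(1)] g_def by auto
    have "g ** R0 = matrix_inv ?M' ** (U ** ?M ** R0)" by (simp add: g_def matrix_mul_assoc)
    also have "\<dots> = (matrix_inv ?M' ** ?M') ** R0'" by (simp add: UMR matrix_mul_assoc)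
    also have "\<dots> = R0'" using inv_props(2)[OF sqrt_facts(1)[OF pd']] by simp
    finally have gR: "g ** R0 = R0'" .
    show "\<exists>g\<in>{g1. invertible g1}. y = sample_act g x"
      using gi gR gP by (intro bexI[of _ g]) (auto simp: xe ye OO sample_act_def)
  qed
next
  show "maximal_invariant {g1 :: real^'k^'k. invertible g1} param_act
           {(\<Delta>, \<mu>, \<Omega>0, \<Phi>). \<mu> \<noteq> (0 :: real^'k) \<and> pos_def_mat \<Omega>0 \<and> pos_def_mat (\<Phi> :: real^'k^'k)}
           (\<lambda>(\<Delta>, \<mu>, \<Omega>0, \<Phi>).
              let c = c_par \<Delta> \<Omega>0; d = d_par \<Delta> \<Omega>0; l = lambda_par \<mu> \<Phi>
              in (c\<^sup>2 * l, c * d * l, d\<^sup>2 * l, \<Omega>0))"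
    unfolding maximal_invariant_def
  proof (intro conjI ballI impI)
    fix g :: "real^'k^'k" and x :: "real \<times> (real^'k) \<times> (real^2^2) \<times> (real^'k^'k)"
    assume g: "g \<in> {g1. invertible g1}"
      and x: "x \<in> {(\<Delta>, \<mu>, \<Omega>0, \<Phi>). \<mu> \<noteq> (0 :: real^'k) \<and> pos_def_mat \<Omega>0 \<and> pos_def_mat (\<Phi> :: real^'k^'k)}"
    obtain D \<mu> \<Omega> \<Phi> where xe: "x = (D, \<mu>, \<Omega>, \<Phi>)" by (cases x) auto
    have pd: "pos_def_mat \<Phi>" using x xe by auto
    have "lambda_par (g *v \<mu>) (g ** \<Phi> ** transpose g) = lambda_par \<mu> \<Phi>"
      unfolding lambda_par_def using bil_inv[OF pd] g by simp
    then show "(case param_act g x of (\<Delta>, \<mu>, \<Omega>0, \<Phi>) \<Rightarrow>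
              let c = c_par \<Delta> \<Omega>0; d = d_par \<Delta> \<Omega>0; l = lambda_par \<mu> \<Phi>
              in (c\<^sup>2 * l, c * d * l, d\<^sup>2 * l, \<Omega>0)) =
          (case x of (\<Delta>, \<mu>, \<Omega>0, \<Phi>) \<Rightarrow>
              let c = c_par \<Delta> \<Omega>0; d = d_par \<Delta> \<Omega>0; l = lambda_par \<mu> \<Phi>
              in (c\<^sup>2 * l, c * d * l, d\<^sup>2 * l, \<Omega>0))"
      unfolding xe param_act_def by (simp add: Let_def)
  next
    fix x y :: "real \<times> (real^'k) \<times> (real^2^2) \<times> (real^'k^'k)"
    assume x: "x \<in> {(\<Delta>, \<mu>, \<Omega>0, \<Phi>). \<mu> \<noteq> (0 :: real^'k) \<and> pos_def_mat \<Omega>0 \<and> pos_def_mat (\<Phi> :: real^'k^'k)}"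
      and y: "y \<in> {(\<Delta>, \<mu>, \<Omega>0, \<Phi>). \<mu> \<noteq> (0 :: real^'k) \<and> pos_def_mat \<Omega>0 \<and> pos_def_mat (\<Phi> :: real^'k^'k)}"
      and eq: "(case x of (\<Delta>, \<mu>, \<Omega>0, \<Phi>) \<Rightarrow>
              let c = c_par \<Delta> \<Omega>0; d = d_par \<Delta> \<Omega>0; l = lambda_par \<mu> \<Phi>
              in (c\<^sup>2 * l, c * d * l, d\<^sup>2 * l, \<Omega>0)) =
          (case y of (\<Delta>, \<mu>, \<Omega>0, \<Phi>) \<Rightarrow>
              let c = c_par \<Delta> \<Omega>0; d = d_par \<Delta> \<Omega>0; l = lambda_par \<mu> \<Phi>
              in (c\<^sup>2 * l, c * d * l, d\<^sup>2 * l, \<Omega>0))"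
    obtain D \<mu> \<Omega> \<Phi> where xe: "x = (D, \<mu>, \<Omega>, \<Phi>)" by (cases x) auto
    obtain D' \<mu>' \<Omega>' \<Phi>' where ye: "y = (D', \<mu>', \<Omega>', \<Phi>')" by (cases y) auto
    have pd: "pos_def_mat \<Phi>" and pdO: "pos_def_mat \<Omega>" and mu: "\<mu> \<noteq> 0" using x xe by auto
    have pd': "pos_def_mat \<Phi>'" and mu': "\<mu>' \<noteq> 0" using y ye by auto
    let ?c = "c_par D \<Omega>" and ?d = "d_par D \<Omega>" and ?l = "lambda_par \<mu> \<Phi>"
    let ?c' = "c_par D' \<Omega>" and ?d' = "d_par D' \<Omega>" and ?l' = "lambda_par \<mu>' \<Phi>'"
    have OO: "\<Omega>' = \<Omega>" and h1: "?c^2 * ?l = ?c'^2 * ?l'" and h2: "?c * ?d * ?l = ?c' * ?d' * ?l'"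
      and h3: "?d^2 * ?l = ?d'^2 * ?l'"
      using eq xe ye by (auto simp: Let_def)
    let ?M = "inv_sqrt_mat \<Phi>" and ?M' = "inv_sqrt_mat \<Phi>'"
    have lsq: "?l = (?M *v \<mu>) \<bullet> (?M *v \<mu>)" unfolding lambda_par_def using sqrt_inner[OF pd] by simp
    have lsq': "?l' = (?M' *v \<mu>') \<bullet> (?M' *v \<mu>')" unfolding lambda_par_def using sqrt_inner[OF pd'] by simp
    have "?M *v \<mu> \<noteq> 0" using mu inj_matrix_vector_mult[OF sqrt_facts(1)[OF pd]]
      by (metis matrix_vector_mult_0_right injD)
    then have lpos: "?l > 0" using lsq by simp
    have "?M' *v \<mu>' \<noteq> 0" using mu' inj_matrix_vector_mult[OF sqrt_facts(1)[OF pd']]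
      by (metis matrix_vector_mult_0_right injD)
    then have lpos': "?l' > 0" using lsq' by simp
    define w where "w = matrix_inv \<Omega> *v e2"
    have s1: "sqrt (e1 \<bullet> (\<Omega> *v e1)) > 0" using e1_pos[OF pdO] by simp
    have s2: "sqrt (e2 \<bullet> w) > 0" using w2_pos[OF pdO] w_def by simp
    have w2: "w$2 > 0" using w2_pos[OF pdO] w_def e2_inner by simp
    have cd: "c_par E \<Omega> = E / sqrt (e1 \<bullet> (\<Omega> *v e1))"
      "d_par E \<Omega> = (E * w$1 + w$2) / sqrt (e2 \<bullet> w)" for E
      unfolding c_par_def d_par_def w_def[symmetric] by (simp_all add: vec_inner)
    have DD: "D = D' \<and> ?l = ?l'"
      by (rule real_part[OF s1 s2 w2 lpos lpos']) (use h1 h2 h3 in \<open>simp_all only: cd\<close>)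
    have "norm (?M *v \<mu>) = norm (?M' *v \<mu>')" using DD lsq lsq' by (simp add: norm_eq_sqrt_inner)
    then obtain f where f: "orthogonal_transformation f" "f (?M *v \<mu>) = ?M' *v \<mu>'"
      using orthogonal_transformation_exists by blast
    define U where "U = matrix f"
    have U: "orthogonal_matrix U" "U *v (?M *v \<mu>) = ?M' *v \<mu>'"
      using orth_mat_of_transf[OF f(1)] f(2) U_def by auto
    define g where "g = matrix_inv ?M' ** U ** ?M"
    have gi: "invertible g" and gP: "g ** \<Phi> ** transpose g = \<Phi>'"
      using transport[OF pd pd' U(1)] g_def by auto
    have "g *v \<mu> = matrix_inv ?M' *v (U *v (?M *v \<mu>))" by (simp add: g_def matrix_vector_mul_assoc matrix_mul_assoc)
    also have "\<dots> = (matrix_inv ?M' ** ?M') *v \<mu>'" unfolding U(2) by (simp add: matrix_vector_mul_assoc)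
    also have "\<dots> = \<mu>'" using inv_props(2)[OF sqrt_facts(1)[OF pd']] by simp
    finally have gm: "g *v \<mu> = \<mu>'" .
    show "\<exists>g\<in>{g1. invertible g1}. y = param_act g x"
      using gi gm gP DD by (intro bexI[of _ g]) (auto simp: xe ye OO param_act_def)
  qed
qed

end
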